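(* Let $p$ be an odd prime, $\lambda$ a partition, and suppose that for some abacus display of $\lambda$ the runners $i,j\in\{0,\dots,p-1\}$ satisfy conditions (F1), (F2), (F3). If $\kappa_p(\lambda)\ne\lambda$, then $i\ne j$.
   Context: Abacus: for $\lambda$ with at most $s$ nonzero parts, $\beta_k=\lambda_k-k+s$ ($1\le k\le s$). Position $q\ge0$ lies on runner $q\bmod p$ and is occupied iff $q$ equals some $\beta_k$. For runner $t$, $\lambda^{(t)}$ is the partition whose $m$-th part is the number of unoccupied positions on runner $t$ smaller than the $m$-th largest occupied position on runner $t$. (F1) $\lambda^{(k)}=\varnothing$ for all $k\notin\{i,j\}$; (F2) if position $i+ap$ is unoccupied then every position $b>i+ap$ not on runner $i$ is unoccupied; (F3) if position $j+cp$ is occupied then every position $d<j+cp$ not on runner $j$ is occupied. $\kappa_p(\lambda)$ is the $p$-core of $\lambda$. *)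

theory Defs
  imports Main "HOL-Computational_Algebra.Primes"
begin

definition is_partition :: "nat list \<Rightarrow> bool" where
  "is_partition la \<longleftrightarrow> sorted (rev la) \<and> 0 \<notin> set la"

(* k-th part, 1-indexed; 0 beyond the length *)
definition part :: "nat list \<Rightarrow> nat \<Rightarrow> nat" where
  "part la k = (if 1 \<le> k \<and> k \<le> length la then la ! (k - 1) else 0)"

(* bead positions of the abacus display with s beads:
   beta_k = lambda_k - k + s, 1 <= k <= s *)
definition beads :: "nat list \<Rightarrow> nat \<Rightarrow> nat set" where
  "beads la s = {part la k + s - k | k. 1 \<le> k \<and> k \<le> s}"

definition occupied :: "nat list \<Rightarrow> nat \<Rightarrow> nat \<Rightarrow> bool" where
  "occupied la s q \<longleftrightarrow> q \<in> beads la s"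

(* lambda^(t): m-th part is the number of unoccupied positions on runner t
   smaller than the m-th largest occupied position on runner t;
   zero parts are discarded (a partition has positive parts). *)
definition runner_partition :: "nat \<Rightarrow> nat list \<Rightarrow> nat \<Rightarrow> nat \<Rightarrow> nat list" where
  "runner_partition p la s t =
     filter (\<lambda>x. x \<noteq> 0)
       (map (\<lambda>x. card {q. q < x \<and> q mod p = t \<and> \<not> occupied la s q})
            (rev (sorted_list_of_set {q \<in> beads la s. q mod p = t})))"

(* Young diagram, cells (row, column), 0-indexed *)
definition young :: "nat list \<Rightarrow> (nat \<times> nat) set" where
  "young la = {(r, c). r < length la \<and> c < la ! r}"

definition cell_adj :: "nat \<times> nat \<Rightarrow> nat \<times> nat \<Rightarrow> bool" where
  "cell_adj x y \<longleftrightarrow>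
     (fst x = fst y \<and> (snd y = Suc (snd x) \<or> snd x = Suc (snd y))) \<or>
     (snd x = snd y \<and> (fst y = Suc (fst x) \<or> fst x = Suc (fst y)))"

definition removes_rim_hook :: "nat \<Rightarrow> nat list \<Rightarrow> nat list \<Rightarrow> bool" where
  "removes_rim_hook p la mu \<longleftrightarrow>
     is_partition mu \<and> young mu \<subseteq> young la \<and>
     (let S = young la - young mu in
        card S = p \<and>
        (\<forall>x\<in>S. \<forall>y\<in>S. (\<lambda>a b. a \<in> S \<and> b \<in> S \<and> cell_adj a b)\<^sup>*\<^sup>* x y) \<and>
        \<not> (\<exists>r c. (r, c) \<in> S \<and> (r, Suc c) \<in> S \<and> (Suc r, c) \<in> S \<and> (Suc r, Suc c) \<in> S))"

inductive core_of :: "nat \<Rightarrow> nat list \<Rightarrow> nat list \<Rightarrow> bool" for p where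
  stop: "\<not> (\<exists>mu. removes_rim_hook p la mu) \<Longrightarrow> core_of p la la"
| step: "removes_rim_hook p la mu \<Longrightarrow> core_of p mu ka \<Longrightarrow> core_of p la ka"

definition p_core :: "nat \<Rightarrow> nat list \<Rightarrow> nat list" where
  "p_core p la = (THE ka. core_of p la ka)"

definition F1 :: "nat \<Rightarrow> nat list \<Rightarrow> nat \<Rightarrow> nat \<Rightarrow> nat \<Rightarrow> bool" where
  "F1 p la s i j \<longleftrightarrow> (\<forall>k<p. k \<notin> {i, j} \<longrightarrow> runner_partition p la s k = [])"

definition F2 :: "nat \<Rightarrow> nat list \<Rightarrow> nat \<Rightarrow> nat \<Rightarrow> bool" where
  "F2 p la s i \<longleftrightarrow> (\<forall>a b. \<not> occupied la s (i + a * p) \<longrightarrow> b > i + a * p \<longrightarrow>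
                        b mod p \<noteq> i \<longrightarrow> \<not> occupied la s b)"

definition F3 :: "nat \<Rightarrow> nat list \<Rightarrow> nat \<Rightarrow> nat \<Rightarrow> bool" where
  "F3 p la s j \<longleftrightarrow> (\<forall>c d. occupied la s (j + c * p) \<longrightarrow> d < j + c * p \<longrightarrow>
                        d mod p \<noteq> j \<longrightarrow> occupied la s d)"

end

theory Submission imports Defs "HOL-Computational_Algebra.Primes" begin

lemma path_ivt:
  fixes f :: "'a \<Rightarrow> int"
  assumes "R\<^sup>*\<^sup>* x y" "\<And>a b. R a b \<Longrightarrow> \<bar>f b - f a\<bar> \<le> 1 \<and> b \<in> S" "x \<in> S"
  shows "min (f x) (f y) \<le> v \<Longrightarrow> v \<le> max (f x) (f y) \<Longrightarrow> \<exists>z\<in>S. f z = v"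
  using assms(1)
proof (induction rule: rtranclp_induct)
  case base then show ?case using assms(3) by auto
next
  case (step y z)
  from assms(2)[OF step.hyps(2)] have h: "\<bar>f z - f y\<bar> \<le> 1" "z \<in> S" by auto
  show ?case
  proof (cases "min (f x) (f y) \<le> v \<and> v \<le> max (f x) (f y)")
    case True then show ?thesis using step.IH by auto
  next
    case False
    then have "v = f z" using step.prems h(1) by (auto simp: min_def max_def split: if_splits)
    then show ?thesis using h by auto
  qed
qed

lemma core_self:
  assumes "\<not> (\<exists>mu. removes_rim_hook p la mu)"
  shows "p_core p la = la"
  unfolding p_core_def
proof (rule the_equality)
  show "core_of p la la" by (rule stop) (use assms in auto)
next
  fix ka assume "core_of p la ka" then show "ka = la"
    by cases (use assms in auto)
qed

lemma beads_img: "beads la s = (\<lambda>k. part la k + s - k) ` {1..s}"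
  unfolding beads_def by auto

lemma flush:
  assumes "2 \<le> p" "i < p" "F1 p la s i i" "F2 p la s i" "F3 p la s i"
    "occupied la s b" "p \<le> b"
  shows "occupied la s (b - p)"
proof (rule ccontr)
  assume nb: "\<not> occupied la s (b - p)"
  define t where "t = b mod p"
  have tp: "t < p" using assms(1) unfolding t_def by auto
  have bmod: "(b - p) mod p = t" unfolding t_def using assms(7) le_mod_geq by metis
  show False
  proof (cases "t = i")
    case True
    define a where "a = b div p - 1"
    have "b div p \<ge> 1" using assms(1,7) by (simp add: Suc_le_eq div_greater_zero_iff)
    have "b = b div p * p + t" unfolding t_def by simp
    then have beq: "b = i + (a + 1) * p" using True \<open>b div p \<ge> 1\<close> unfolding a_def by simp
    then have bp: "b - p = i + a * p" by simp
    have dmod: "(i + a * p + 1) mod p \<noteq> i"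
    proof -
      have "(i + a * p + 1) mod p = (i + 1) mod p" proof -
        have "i + a * p + 1 = (i + 1) + a * p" by simp
        then show ?thesis by simp
      qed
      moreover have "(i + 1) mod p \<noteq> i"
      proof (cases "i + 1 < p")
        case True then show ?thesis by simp
      next
        case False then have "i + 1 = p" using assms(2) by simp
        then show ?thesis using assms(1) by auto
      qed
      ultimately show ?thesis by simp
    qed
    have "\<not> occupied la s (i + a * p + 1)"
      using assms(4) nb unfolding F2_def bp using dmod by auto
    moreover have "occupied la s (i + a * p + 1)"
    proof -
      have o: "occupied la s (i + (a + 1) * p)" using assms(6) beq by simp
      have "i + a * p + 1 < i + (a + 1) * p" using assms(1) by simp
      then show ?thesis using assms(5) o dmod unfolding F3_def by blast
    qed
    ultimately show False by simp
  next
    case False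
    then have "runner_partition p la s t = []" using assms(3) tp unfolding F1_def by auto
    moreover have fin: "finite (beads la s)" unfolding beads_img by simp
    ultimately have AL: "\<forall>x\<in>{q \<in> beads la s. q mod p = t}.
        card {q. q < x \<and> q mod p = t \<and> \<not> occupied la s q} = 0"
      unfolding runner_partition_def filter_empty_conv by auto
    have BI: "b \<in> {q \<in> beads la s. q mod p = t}" using assms(6) unfolding occupied_def t_def by auto
    have c0: "card {q. q < b \<and> q mod p = t \<and> \<not> occupied la s q} = 0" using bspec[OF AL BI] by simp
    have "b - p \<in> {q. q < b \<and> q mod p = t \<and> \<not> occupied la s q}"
      using nb bmod assms(1,7) by auto
    moreover have "finite {q. q < b \<and> q mod p = t \<and> \<not> occupied la s q}" by simp
    ultimately show False using c0 by auto
  qed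
qed


lemma no_hook:
  assumes part: "is_partition la" and len: "length la \<le> s" and pp: "0 < p"
    and fl: "\<And>b. occupied la s b \<Longrightarrow> p \<le> b \<Longrightarrow> occupied la s (b - p)"
    and rh: "removes_rim_hook p la mu"
  shows False
proof -
  define L where "L x = part la (Suc x)" for x
  define M where "M x = part mu (Suc x)" for x
  define S where "S = young la - young mu"
  have pm: "is_partition mu" and sub: "young mu \<subseteq> young la" and cS: "card S = p"
    and conn: "\<forall>x\<in>S. \<forall>y\<in>S. (\<lambda>a b. a \<in> S \<and> b \<in> S \<and> cell_adj a b)\<^sup>*\<^sup>* x y"
    and no22: "\<not> (\<exists>r c. (r, c) \<in> S \<and> (r, Suc c) \<in> S \<and> (Suc r, c) \<in> S \<and> (Suc r, Suc c) \<in> S)"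
    using rh unfolding removes_rim_hook_def S_def Let_def by auto
  have mono: "\<And>nu x y. is_partition nu \<Longrightarrow> x \<le> y \<Longrightarrow> part nu (Suc y) \<le> part nu (Suc x)"
    unfolding is_partition_def part_def using sorted_rev_nth_mono by fastforce
  have Lm: "x \<le> y \<Longrightarrow> L y \<le> L x" for x y unfolding L_def using mono[OF part] .
  have Mm: "x \<le> y \<Longrightarrow> M y \<le> M x" for x y unfolding M_def using mono[OF pm] .
  have yg: "\<And>nu x y. (x, y) \<in> young nu \<longleftrightarrow> y < part nu (Suc x)"
    unfolding young_def part_def by auto
  have yl: "(x, y) \<in> young la \<longleftrightarrow> y < L x" for x y unfolding L_def using yg .
  have ym: "(x, y) \<in> young mu \<longleftrightarrow> y < M x" for x y unfolding M_def using yg .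
  have MLe: "M x \<le> L x" for x
  proof (rule ccontr)
    assume "\<not> M x \<le> L x"
    then have "(x, L x) \<in> young mu" using ym by simp
    then show False using sub yl by auto
  qed
  have Sm: "(x, y) \<in> S \<longleftrightarrow> M x \<le> y \<and> y < L x" for x y
    unfolding S_def using yl ym by auto
  have lenS: "(x, y) \<in> S \<Longrightarrow> x < length la" for x y
    unfolding S_def young_def by auto
  have finS: "finite S"
  proof (rule finite_subset)
    show "S \<subseteq> {..<length la} \<times> {..<L 0}"
    proof
      fix z assume z: "z \<in> S"
      obtain x y where zz: "z = (x, y)" by fastforce
      have "x < length la" using lenS z zz by simp
      moreover have "y < L x" using Sm z zz by simp
      moreover have "L x \<le> L 0" using Lm by simp
      ultimately show "z \<in> {..<length la} \<times> {..<L 0}" using zz by simp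
    qed
  qed simp
  have Sne: "S \<noteq> {}" using cS pp by auto
  define r where "r = Min (fst ` S)"
  define t where "t = Max (fst ` S)"
  have rb: "z \<in> S \<Longrightarrow> r \<le> fst z \<and> fst z \<le> t" for z
    unfolding r_def t_def using finS by auto
  have "r \<in> fst ` S" unfolding r_def using finS Sne by (simp add: Min_in)
  then obtain y0 where y0: "(r, y0) \<in> S" by force
  have "t \<in> fst ` S" unfolding t_def using finS Sne by (simp add: Max_in)
  then obtain y1 where y1: "(t, y1) \<in> S" by force
  have rS: "(r, L r - 1) \<in> S" using y0 Sm by auto
  have tS: "(t, M t) \<in> S" using y1 Sm by auto
  have Mt1: "M (Suc t) = L (Suc t)"
  proof (rule ccontr)
    assume "M (Suc t) \<noteq> L (Suc t)"
    then have "(Suc t, M (Suc t)) \<in> S" using Sm MLe le_neq_implies_less by blast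
    then show False using rb by fastforce
  qed
  have tlen: "t < length la" using lenS y1 .
  have rt: "r \<le> t" using rb y1 by fastforce
  define c where "c z = int (snd z) - int (fst z)" for z :: "nat \<times> nat"
  have inj: "inj_on c S"
  proof (rule inj_onI)
    fix u v assume u: "u \<in> S" and v: "v \<in> S" and e: "c u = c v"
    show "u = v"
    proof (rule ccontr)
      assume ne: "u \<noteq> v"
      have key: "False" if a: "(a, y) \<in> S" and b: "(b, y') \<in> S" and ab: "a < b"
        and ee: "int y - int a = int y' - int b" for a b y y'
      proof -
        have "y' = y + (b - a)" using ee ab by linarith
        have "L b \<le> L (Suc a)" using Lm ab by simp
        moreover have "L (Suc a) \<le> L a" using Lm by simp
        moreover have "M (Suc a) \<le> M a" using Mm by simp
        moreover have "y' < L b" "M a \<le> y" using a b Sm by auto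
        ultimately have "(a, y) \<in> S \<and> (a, Suc y) \<in> S \<and> (Suc a, y) \<in> S \<and> (Suc a, Suc y) \<in> S"
          using Sm \<open>y' = y + (b - a)\<close> ab by auto
        then show False using no22 by blast
      qed
      obtain a y b y' where uu: "u = (a, y)" and vv: "v = (b, y')" by fastforce
      have ee: "int y - int a = int y' - int b" using e uu vv unfolding c_def by simp
      consider "a < b" | "b < a" | "a = b" by arith
      then show False
      proof cases
        case 1 then show ?thesis using key u v ee uu vv by blast
      next
        case 2 then show ?thesis using key u v ee uu vv by (metis)
      next
        case 3 then show ?thesis using ee ne uu vv by simp
      qed
    qed
  qed
  define hi where "hi = int (L r) - int r - 1"
  define lo where "lo = int (M t) - int t"
  define lo2 where "lo2 = int (L (Suc t)) - int t"
  have sub1: "c ` S \<subseteq> {lo2..hi}"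
  proof
    fix w assume "w \<in> c ` S"
    then obtain x y where xy: "(x, y) \<in> S" and w: "w = int y - int x" unfolding c_def by auto
    have "r \<le> x" "x \<le> t" using rb[OF xy] by auto
    then have "L x \<le> L r" "M t \<le> M x" "M (Suc t) \<le> M t" using Lm Mm by auto
    moreover have "M x \<le> y" "y < L x" using xy Sm by auto
    ultimately show "w \<in> {lo2..hi}" unfolding w lo2_def hi_def using Mt1 \<open>r \<le> x\<close> \<open>x \<le> t\<close>
      by auto
  qed
  have sub2: "{lo..hi} \<subseteq> c ` S"
  proof
    fix v assume v: "v \<in> {lo..hi}"
    have path: "(\<lambda>a b. a \<in> S \<and> b \<in> S \<and> cell_adj a b)\<^sup>*\<^sup>* (t, M t) (r, L r - 1)"
      using conn tS rS by blast
    have step: "\<bar>c b - c a\<bar> \<le> 1 \<and> b \<in> S" if "a \<in> S \<and> b \<in> S \<and> cell_adj a b" for a b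
      using that unfolding cell_adj_def c_def by auto
    have "L r \<ge> 1" using y0 Sm by auto
    then have "c (r, L r - 1) = hi" unfolding c_def hi_def by simp
    moreover have "c (t, M t) = lo" unfolding c_def lo_def by simp
    ultimately obtain z where "z \<in> S" "c z = v"
      using path_ivt[OF path step tS, of v] v by fastforce
    then show "v \<in> c ` S" by blast
  qed
  have "lo \<in> c ` S" using tS unfolding c_def lo_def by force
  then have lohi: "lo \<le> hi" and lo2hi: "lo2 \<le> hi" using sub1 by auto
  have cSe: "card S = card (c ` S)" using card_image[OF inj] by simp
  have pup: "int p \<le> hi - lo2 + 1"
  proof -
    have "card (c ` S) \<le> card {lo2..hi}" using sub1 card_mono by blast
    then show ?thesis using cS cSe lo2hi by simp
  qed
  have plo: "hi - lo + 1 \<le> int p"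
  proof -
    have "card {lo..hi} \<le> card (c ` S)" using sub2 card_mono finS by blast
    then show ?thesis using cS cSe lohi by simp
  qed
  define B where "B = L r + s - Suc r"
  have rs: "r < s" using rt tlen len by simp
  have occ: "occupied la s q \<longleftrightarrow> (\<exists>x<s. q = L x + s - Suc x)" for q
    unfolding occupied_def beads_def L_def
  proof
    assume "q \<in> {part la k + s - k |k. 1 \<le> k \<and> k \<le> s}"
    then obtain k where k: "q = part la k + s - k" "1 \<le> k" "k \<le> s" by blast
    then show "\<exists>x<s. q = part la (Suc x) + s - Suc x" by (intro exI[of _ "k - 1"]) auto
  next
    assume "\<exists>x<s. q = part la (Suc x) + s - Suc x"
    then obtain x where "x < s" "q = part la (Suc x) + s - Suc x" by blast
    then show "q \<in> {part la k + s - k |k. 1 \<le> k \<and> k \<le> s}" by (auto intro!: exI[of _ "Suc x"])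
  qed
  have oB: "occupied la s B" unfolding B_def occ using rs by blast
  have iB: "int B = int (L r) + int s - int r - 1" unfolding B_def using rs by simp
  have Mlt: "M t < L t" using tS Sm by simp
  have Lt1: "L (Suc t) \<le> L t" using Lm by simp
  have "p \<le> B" using iB pup rs tlen len unfolding hi_def lo2_def by linarith
  then have oBp: "occupied la s (B - p)" using fl oB by blast
  then obtain x where xs: "x < s" and xe: "B - p = L x + s - Suc x" unfolding occ by blast
  have ie: "int B - int p = int (L x) + int s - int x - 1"
  proof -
    have "int (B - p) = int B - int p" using \<open>p \<le> B\<close> by simp
    moreover have "int (L x + s - Suc x) = int (L x) + int s - int x - 1" using xs by simp
    ultimately show ?thesis using xe by simp
  qed
  show False
  proof (cases "x \<le> t")
    case True
    then have "L t \<le> L x" using Lm by simp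
    then show False using ie iB plo Mlt True unfolding hi_def lo_def by linarith
  next
    case False
    then have "L x \<le> L (Suc t)" using Lm by simp
    then show False using ie iB pup False unfolding hi_def lo2_def by linarith
  qed
qed

theorem lemma4p5:
  fixes p :: nat and la :: "nat list" and i j :: nat
  assumes "prime p" and "odd p"
    and "is_partition la"
    and "i < p" and "j < p"
    and "\<exists>s. length la \<le> s \<and> F1 p la s i j \<and> F2 p la s i \<and> F3 p la s j"
    and "p_core p la \<noteq> la"
  shows "i \<noteq> j"
proof
  assume ij: "i = j"
  obtain s where s: "length la \<le> s" "F1 p la s i j" "F2 p la s i" "F3 p la s j"
    using assms(6) by blast
  have p2: "2 \<le> p" using assms(1) prime_ge_2_nat by blast
  have fl: "\<And>b. occupied la s b \<Longrightarrow> p \<le> b \<Longrightarrow> occupied la s (b - p)"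
    using flush[OF p2 assms(4)] s ij by blast
  have "\<not> (\<exists>mu. removes_rim_hook p la mu)"
    using no_hook[OF assms(3) s(1) _ fl] p2 by auto
  then have "p_core p la = la" by (rule core_self)
  then show False using assms(7) by simp
qed

end
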